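(* Let $\lambda\neq0$ and $\xi=e_{12}-e_{14}+\lambda e_2$. On $\mathbb R^4$ use the global coordinates $\tilde x^1=2\lambda x^1+(x^2+x^4)^2$, $\tilde x^2=(x^2+x^4)/\lambda$, $\tilde x^3=x^3$, $\tilde x^4=\lambda x^4+x^1(x^2+x^4)+(x^2+x^4)^3/(3\lambda)$. Then a smooth covector field $A$ on $\mathbb R^4$ satisfies $L_\xi A=0$ if and only if there are smooth functions $C_1,C_2,C_3,B$ of $(\tilde x^1,\tilde x^3,\tilde x^4)\in\mathbb R^3$ such that $$A_1=C_2\tilde x^2+C_3,\quad A_2=\tfrac12C_2(\tilde x^2)^2+C_3\tilde x^2+C_1,\quad A_3=B,\quad A_4=A_2+C_2 .$$
   Context: Work in $\mathbb R^4$ with Galilean (Cartesian) coordinates $x^1,x^2,x^3,x^4$ of Minkowski space (metric $\mathrm{diag}(-1,-1,-1,1)$). A potential on an open set $U\subseteq\mathbb R^4$ is a smooth covector field $A=A_i\,dx^i$; its components $A_i$ are always those with respect to the coordinates $x^i$, even when written as functions of other variables. For a vector field $\xi=\xi^k\partial_k$ the Lie derivative is $(L_\xi A)_i=\xi^k\partial_kA_i+A_k\partial_i\xi^k$. The vector fields used are, by components $(\xi^1,\xi^2,\xi^3,\xi^4)$: $e_1=(1,0,0,0)$, $e_2=(0,1,0,0)$, $e_3=(0,0,1,0)$, $e_4=(0,0,0,1)$, $e_{12}=(-x^2,x^1,0,0)$, $e_{13}=(x^3,0,-x^1,0)$, $e_{23}=(0,-x^3,x^2,0)$, $e_{14}=(x^4,0,0,x^1)$,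 $e_{24}=(0,x^4,0,x^2)$, $e_{34}=(0,0,x^4,x^3)$. A potential admits a family of vector fields if $L_\xi A=0$ for each $\xi$ in it (equivalently for every element of their linear span). "Functions" are smooth real functions; $\mathrm{ch}=\cosh$, $\mathrm{sh}=\sinh$. *)

theory Defs
  imports "HOL-Analysis.Analysis"
begin

definition pd :: "'n::finite \<Rightarrow> (real^'n \<Rightarrow> real) \<Rightarrow> real^'n \<Rightarrow> real" where
  "pd i f x = frechet_derivative f (at x) (axis i 1)"

fun Ck :: "nat \<Rightarrow> (real^'n::finite \<Rightarrow> real) \<Rightarrow> bool" where
  "Ck 0 f = continuous_on UNIV f"
| "Ck (Suc k) f = ((\<forall>x. f differentiable (at x)) \<and> (\<forall>i. Ck k (pd i f)))"

definition smooth :: "(real^'n::finite \<Rightarrow> real) \<Rightarrow> bool" where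
  "smooth f \<longleftrightarrow> (\<forall>k. Ck k f)"

text \<open>A covector field on R^4 is given by its components A x $ i (w.r.t. x^i);
  a vector field likewise by xi x $ k.\<close>
definition smooth_field :: "(real^4 \<Rightarrow> real^4) \<Rightarrow> bool" where
  "smooth_field A \<longleftrightarrow> (\<forall>i. smooth (\<lambda>x. A x $ i))"

definition lie :: "(real^4 \<Rightarrow> real^4) \<Rightarrow> (real^4 \<Rightarrow> real^4) \<Rightarrow> real^4 \<Rightarrow> real^4" where
  "lie xi A x = (\<chi> i. (\<Sum>k\<in>UNIV. xi x $ k * pd k (\<lambda>y. A y $ i) x
                                + A x $ k * pd i (\<lambda>y. xi y $ k) x))"

definition e2 :: "real^4 \<Rightarrow> real^4" where
  "e2 x = vector [0, 1, 0, 0]"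
definition e12 :: "real^4 \<Rightarrow> real^4" where
  "e12 x = vector [- (x$2), x$1, 0, 0]"
definition e14 :: "real^4 \<Rightarrow> real^4" where
  "e14 x = vector [x$4, 0, 0, x$1]"

end

theory Submission
  imports Defs
begin


lemma vector_4 [simp]:
 "(vector [x,y,z,w] ::('a::zero)^4)$1 = x"
 "(vector [x,y,z,w] ::('a::zero)^4)$2 = y"
 "(vector [x,y,z,w] ::('a::zero)^4)$3 = z"
 "(vector [x,y,z,w] ::('a::zero)^4)$4 = w"
  unfolding vector_def by simp_all

lemma lin_expand:
  fixes F :: "real^'n::finite \<Rightarrow> real"
  assumes "linear F"
  shows "F v = (\<Sum>k\<in>UNIV. v$k * F (axis k 1))"
proof -
  have "F v = F (\<Sum>k\<in>UNIV. v$k *\<^sub>R axis k 1)"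
    using basis_expansion[of v] by (simp add: scalar_mult_eq_scaleR)
  also have "\<dots> = (\<Sum>k\<in>UNIV. v$k * F (axis k 1))"
    using assms by (simp add: linear_sum linear_scale)
  finally show ?thesis .
qed

lemma pd_add:
  assumes "f differentiable at x" "g differentiable at x"
  shows "pd i (\<lambda>y. f y + g y) x = pd i f x + pd i g x"
proof -
  have "((\<lambda>y. f y + g y) has_derivative (\<lambda>h. frechet_derivative f (at x) h + frechet_derivative g (at x) h)) (at x)"
    using assms by (intro has_derivative_add) (auto simp: frechet_derivative_works)
  then show ?thesis unfolding pd_def by (simp add: frechet_derivative_at[symmetric])
qed

lemma pd_cmult:
  assumes "f differentiable at x"
  shows "pd i (\<lambda>y. c * f y) x = c * pd i f x"
proof -
  have "((\<lambda>y. c * f y) has_derivative (\<lambda>h. c * frechet_derivative f (at x) h)) (at x)"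
    using assms by (intro has_derivative_mult_right) (auto simp: frechet_derivative_works)
  then show ?thesis unfolding pd_def by (simp add: frechet_derivative_at[symmetric])
qed

lemma pd_const: "pd i (\<lambda>y. c) x = 0"
proof -
  have "((\<lambda>y. c) has_derivative (\<lambda>h. 0)) (at x)" by (rule has_derivative_const)
  then show ?thesis unfolding pd_def by (simp add: frechet_derivative_at[symmetric])
qed

lemma Ck_diff: "Ck (Suc k) f \<Longrightarrow> f differentiable at x" by simp

lemma Ck_const: "Ck k (\<lambda>x. c)"
  by (induction k arbitrary: c) (auto simp: pd_const[abs_def] continuous_on_const)

lemma Ck_add: "Ck k f \<Longrightarrow> Ck k g \<Longrightarrow> Ck k (\<lambda>x. f x + g x)"
proof (induction k arbitrary: f g)
  case 0 then show ?case by (auto intro: continuous_on_add)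
next
  case (Suc k)
  have e: "pd i (\<lambda>y. f y + g y) = (\<lambda>x. pd i f x + pd i g x)" for i
    using Suc.prems by (auto intro!: pd_add)
  show ?case using Suc by (auto simp: e)
qed

lemma Ck_cmult: "Ck k f \<Longrightarrow> Ck k (\<lambda>x. c * f x)"
proof (induction k arbitrary: f)
  case 0 then show ?case by (auto intro: continuous_on_mult_left)
next
  case (Suc k)
  have e: "pd i (\<lambda>y. c * f y) = (\<lambda>x. c * pd i f x)" for i
    using Suc.prems by (auto intro!: pd_cmult)
  show ?case using Suc by (auto simp: e)
qed

lemma Ck_sum: "finite S \<Longrightarrow> (\<And>j. j \<in> S \<Longrightarrow> Ck k (f j)) \<Longrightarrow> Ck k (\<lambda>x. \<Sum>j\<in>S. f j x)"
  by (induction S rule: finite_induct) (auto intro: Ck_add Ck_const)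

lemma Ck_comp_linear:
  fixes L :: "real^'m::finite \<Rightarrow> real^'n::finite"
  assumes L: "linear L"
  shows "Ck k f \<Longrightarrow> Ck k (\<lambda>x. f (L x))"
proof (induction k arbitrary: f)
  case 0
  have "continuous_on UNIV L" using L by (simp add: linear_continuous_on linear_linear)
  then show ?case using 0 by (auto intro: continuous_on_compose2[of UNIV f])
next
  case (Suc k)
  have bl: "bounded_linear L" using L by (simp add: linear_linear)
  have dL: "(L has_derivative L) (at x)" for x using bl by (rule bounded_linear_imp_has_derivative)
  have df: "(f has_derivative frechet_derivative f (at (L x))) (at (L x))" for x
    using Suc.prems by (simp add: frechet_derivative_works)
  have dc: "((\<lambda>x. f (L x)) has_derivative (\<lambda>h. frechet_derivative f (at (L x)) (L h))) (at x)" for x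
    using diff_chain_at[OF dL df] by (simp add: o_def)
  have lin: "linear (frechet_derivative f (at (L x)))" for x
    using df has_derivative_linear by blast
  have e: "pd i (\<lambda>x. f (L x)) = (\<lambda>x. \<Sum>j\<in>UNIV. L (axis i 1) $ j * pd j f (L x))" for i
  proof
    fix x
    have "pd i (\<lambda>x. f (L x)) x = frechet_derivative f (at (L x)) (L (axis i 1))"
      unfolding pd_def using dc[of x] by (simp add: frechet_derivative_at[symmetric])
    also have "\<dots> = (\<Sum>j\<in>UNIV. L (axis i 1) $ j * pd j f (L x))"
      by (subst lin_expand[OF lin]) (simp add: pd_def)
    finally show "pd i (\<lambda>x. f (L x)) x = (\<Sum>j\<in>UNIV. L (axis i 1) $ j * pd j f (L x))" .
  qed
  have "Ck k (\<lambda>x. \<Sum>j\<in>UNIV. L (axis i 1) $ j * pd j f (L x))" for i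
    using Suc by (intro Ck_sum Ck_cmult) auto
  then show ?case using dc by (auto simp: e differentiable_def)
qed

lemma smooth_comp_linear: "linear L \<Longrightarrow> smooth f \<Longrightarrow> smooth (\<lambda>x. f (L x))"
  unfolding smooth_def using Ck_comp_linear by blast

lemma smooth_add: "smooth f \<Longrightarrow> smooth g \<Longrightarrow> smooth (\<lambda>x. f x + g x)"
  unfolding smooth_def using Ck_add by blast

lemma smooth_cmult: "smooth f \<Longrightarrow> smooth (\<lambda>x. c * f x)"
  unfolding smooth_def using Ck_cmult by blast



definition gx1 :: "real \<Rightarrow> real^3 \<Rightarrow> real \<Rightarrow> real" where
  "gx1 lam p t = (p$1 - (lam*t)^2) / (2*lam)"
definition gx4 :: "real \<Rightarrow> real^3 \<Rightarrow> real \<Rightarrow> real" where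
  "gx4 lam p t = (p$3 - gx1 lam p t * (lam*t) - (lam*t)^3/(3*lam)) / lam"
definition gam :: "real \<Rightarrow> real^3 \<Rightarrow> real \<Rightarrow> real^4" where
  "gam lam p t = vector [gx1 lam p t, lam*t - gx4 lam p t, p$2, gx4 lam p t]"
definition xiv :: "real \<Rightarrow> real^4 \<Rightarrow> real^4" where
  "xiv lam y = vector [-(y$2) - y$4, y$1 + lam, 0, -(y$1)]"

lemma vec_has_derivative:
  fixes f :: "'a::real_normed_vector \<Rightarrow> real^'n::finite"
  assumes "\<And>j. ((\<lambda>t. f t $ j) has_derivative (\<lambda>h. f' h $ j)) (at x within S)"
  shows "(f has_derivative f') (at x within S)"
proof (rule iffD2[OF has_derivative_componentwise_within], intro ballI)
  fix i :: "real^'n" assume "i \<in> Basis"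
  then obtain j where i: "i = axis j 1" unfolding Basis_vec_def by auto
  have e: "y \<bullet> i = y $ j" for y :: "real^'n" unfolding i inner_axis by simp
  show "((\<lambda>x. f x \<bullet> i) has_derivative (\<lambda>x. f' x \<bullet> i)) (at x within S)"
    unfolding e by (rule assms)
qed

lemma vec_nth_has_derivative [derivative_intros]:
  "((\<lambda>y::real^'n::finite. y $ j) has_derivative (\<lambda>h. h $ j)) F"
  by (rule bounded_linear_imp_has_derivative) (rule bounded_linear_vec_nth)

lemma gx1_deriv: "lam \<noteq> 0 \<Longrightarrow> ((\<lambda>t. gx1 lam p t) has_real_derivative (-(lam*t))) (at t)"
  unfolding gx1_def
  by (auto intro!: derivative_eq_intros simp: field_simps power2_eq_square)

lemma gx4_deriv: "lam \<noteq> 0 \<Longrightarrow> ((\<lambda>t. gx4 lam p t) has_real_derivative (-(gx1 lam p t))) (at t)"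
  unfolding gx4_def
  by (auto intro!: derivative_eq_intros gx1_deriv simp: field_simps power2_eq_square power3_eq_cube)

lemma gam_deriv:
  assumes "lam \<noteq> 0"
  shows "(gam lam p has_derivative (\<lambda>h. h *\<^sub>R xiv lam (gam lam p t))) (at t)"
proof (rule vec_has_derivative)
  fix j :: 4
  have d1: "((\<lambda>t. gx1 lam p t) has_derivative (\<lambda>h. h * (-(lam*t)))) (at t)"
    using gx1_deriv[OF assms, of p t] unfolding has_field_derivative_def
    by (rule has_derivative_eq_rhs) (auto simp: fun_eq_iff algebra_simps)
  have d4: "((\<lambda>t. gx4 lam p t) has_derivative (\<lambda>h. h * (-(gx1 lam p t)))) (at t)"
    using gx4_deriv[OF assms, of p t] unfolding has_field_derivative_def
    by (rule has_derivative_eq_rhs) (auto simp: fun_eq_iff algebra_simps)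
  have d2: "((\<lambda>t. lam*t - gx4 lam p t) has_derivative (\<lambda>h. h * (lam + gx1 lam p t))) (at t)"
    using has_derivative_diff[OF has_derivative_mult_right[OF has_derivative_ident, of lam] d4]
    by (simp add: algebra_simps)
  show "((\<lambda>t. gam lam p t $ j) has_derivative (\<lambda>h. (h *\<^sub>R xiv lam (gam lam p t)) $ j)) (at t)"
    using exhaust_4[of j] d1 d2 d4
    by (auto simp: gam_def xiv_def algebra_simps)
qed

lemma path_deriv:
  assumes "lam \<noteq> 0" "f differentiable at (gam lam p t)"
  shows "((\<lambda>s. f (gam lam p s)) has_real_derivative
          frechet_derivative f (at (gam lam p t)) (xiv lam (gam lam p t))) (at t)"
proof -
  have df: "(f has_derivative frechet_derivative f (at (gam lam p t))) (at (gam lam p t))"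
    using assms(2) by (simp add: frechet_derivative_works)
  have lin: "linear (frechet_derivative f (at (gam lam p t)))"
    using df has_derivative_linear by blast
  have "((\<lambda>s. f (gam lam p s)) has_derivative
         (\<lambda>h. frechet_derivative f (at (gam lam p t)) (h *\<^sub>R xiv lam (gam lam p t)))) (at t)"
    using diff_chain_at[OF gam_deriv[OF assms(1)] df] by (simp add: o_def)
  then show ?thesis unfolding has_field_derivative_def
    by (rule has_derivative_eq_rhs) (auto simp: fun_eq_iff linear_scale[OF lin])
qed

lemma pd_xiv: "pd i (\<lambda>y. xiv lam y $ k) x = xiv 0 (axis i 1) $ k"
proof -
  have "((\<lambda>y. xiv lam y $ k) has_derivative (\<lambda>h. xiv 0 h $ k)) (at x)"
    using exhaust_4[of k]
    by (auto simp: xiv_def intro!: derivative_eq_intros)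
  then show ?thesis unfolding pd_def by (simp add: frechet_derivative_at[symmetric])
qed

lemma lie_xiv:
  assumes "\<And>i. (\<lambda>y. A y $ i) differentiable at x"
  shows "lie (xiv lam) A x $ i = frechet_derivative (\<lambda>y. A y $ i) (at x) (xiv lam x)
           + (\<Sum>k\<in>UNIV. A x $ k * xiv 0 (axis i 1) $ k)"
proof -
  have lin: "linear (frechet_derivative (\<lambda>y. A y $ i) (at x))"
    using assms[of i] frechet_derivative_works has_derivative_linear by blast
  show ?thesis
    unfolding lie_def
    by (simp add: sum.distrib pd_xiv lin_expand[OF lin, of "xiv lam x"] pd_def)
qed

lemma lie_xiv_comps:
  assumes "\<And>i. (\<lambda>y. A y $ i) differentiable at x"
  shows "lie (xiv lam) A x = 0 \<longleftrightarrow>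
    frechet_derivative (\<lambda>y. A y $ 1) (at x) (xiv lam x) = A x $ 4 - A x $ 2 \<and>
    frechet_derivative (\<lambda>y. A y $ 2) (at x) (xiv lam x) = A x $ 1 \<and>
    frechet_derivative (\<lambda>y. A y $ 3) (at x) (xiv lam x) = 0 \<and>
    frechet_derivative (\<lambda>y. A y $ 4) (at x) (xiv lam x) = A x $ 1"
  unfolding vec_eq_iff forall_4
  by (simp add: lie_xiv[OF assms] sum_4 xiv_def axis_def) argo


lemma gam_t:
  assumes "lam \<noteq> 0"
  shows "2*lam*(gam lam p s)$1 + ((gam lam p s)$2 + (gam lam p s)$4)^2 = p$1"
    "((gam lam p s)$2 + (gam lam p s)$4) / lam = s"
    "(gam lam p s)$3 = p$2"
    "lam * (gam lam p s)$4 + (gam lam p s)$1 * ((gam lam p s)$2 + (gam lam p s)$4)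
       + ((gam lam p s)$2 + (gam lam p s)$4)^3 / (3*lam) = p$3"
  using assms by (simp_all add: gam_def gx4_def gx1_def field_simps power2_eq_square power3_eq_cube)

lemma gam_inv:
  assumes "lam \<noteq> 0"
  shows "gam lam (vector [2*lam*x$1 + (x$2+x$4)^2, x$3,
            lam*x$4 + x$1*(x$2+x$4) + (x$2+x$4)^3/(3*lam)]) ((x$2+x$4)/lam) = x"
  using assms unfolding vec_eq_iff forall_4
  by (simp add: gam_def gx4_def gx1_def field_simps power2_eq_square power3_eq_cube)

lemma gam0_linear:
  assumes "lam \<noteq> 0"
  shows "linear (\<lambda>p. gam lam p 0)"
  using assms by (intro linearI) (auto simp: vec_eq_iff forall_4 gam_def gx4_def gx1_def add_divide_distrib)

theorem mainTheorem4:
  fixes lam :: real and A :: "real^4 \<Rightarrow> real^4"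
  assumes "lam \<noteq> 0"
    and "smooth_field A"
  defines "xi \<equiv> (\<lambda>x. e12 x - e14 x + lam *\<^sub>R e2 x)"
    and "t1 \<equiv> (\<lambda>x::real^4. 2 * lam * x$1 + (x$2 + x$4)^2)"
    and "t2 \<equiv> (\<lambda>x::real^4. (x$2 + x$4) / lam)"
    and "t3 \<equiv> (\<lambda>x::real^4. x$3)"
    and "t4 \<equiv> (\<lambda>x::real^4. lam * x$4 + x$1 * (x$2 + x$4) + (x$2 + x$4)^3 / (3 * lam))"
  shows "(\<forall>x. lie xi A x = 0) \<longleftrightarrow>
    (\<exists>C1 C2 C3 B :: real^3 \<Rightarrow> real. smooth C1 \<and> smooth C2 \<and> smooth C3 \<and> smooth B \<and>
      (\<forall>x. let p = vector [t1 x, t3 x, t4 x] in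
         A x $ 1 = C2 p * t2 x + C3 p \<and>
         A x $ 2 = C2 p * (t2 x)^2 / 2 + C3 p * t2 x + C1 p \<and>
         A x $ 3 = B p \<and>
         A x $ 4 = A x $ 2 + C2 p))"
proof -
  have lam: "lam \<noteq> 0" by fact
  have xi: "xi = xiv lam" unfolding xi_def
    by (auto simp: fun_eq_iff vec_eq_iff forall_4 e12_def e14_def e2_def xiv_def)
  have sm: "smooth (\<lambda>y. A y $ i)" for i using assms(2) smooth_field_def by blast
  have dA: "(\<lambda>y. A y $ i) differentiable at x" for i x
    using sm[of i] unfolding smooth_def by (metis Ck_diff)
  define E where "E i x = frechet_derivative (\<lambda>y. A y $ i) (at x) (xiv lam x)" for i x
  have pathd: "((\<lambda>s. A (gam lam p s) $ i) has_real_derivative E i (gam lam p t)) (at t)" for i p t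
    unfolding E_def by (rule path_deriv[OF lam dA])
  have lieE: "lie xi A x = 0 \<longleftrightarrow> E 1 x = A x $ 4 - A x $ 2 \<and> E 2 x = A x $ 1 \<and>
      E 3 x = 0 \<and> E 4 x = A x $ 1" for x
    unfolding xi E_def by (rule lie_xiv_comps[OF dA])
  define P where "P x = (vector [t1 x, t3 x, t4 x] :: real^3)" for x
  have PI: "gam lam (P x) (t2 x) = x" for x
    unfolding P_def t1_def t2_def t3_def t4_def using gam_inv[OF lam] by simp
  have Pg: "P (gam lam p s) = p" for p s
    unfolding P_def t1_def t3_def t4_def using gam_t[OF lam, of p s]
    by (simp add: vec_eq_iff forall_3)
  have tg: "t2 (gam lam p s) = s" for p s
    unfolding t2_def using gam_t[OF lam, of p s] by simp
  show ?thesis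
  proof
    assume L: "\<forall>x. lie xi A x = 0"
    have EE: "E 1 x = A x $ 4 - A x $ 2" "E 2 x = A x $ 1" "E 3 x = 0" "E 4 x = A x $ 1" for x
      using L lieE by blast+
    define C3 where "C3 p = A (gam lam p 0) $ 1" for p
    define C1 where "C1 p = A (gam lam p 0) $ 2" for p
    define B where "B p = A (gam lam p 0) $ 3" for p
    define C2 where "C2 p = A (gam lam p 0) $ 4 + (-1) * A (gam lam p 0) $ 2" for p
    have smC: "smooth C1" "smooth C2" "smooth C3" "smooth B"
      unfolding C1_def C2_def C3_def B_def
      by (intro smooth_add smooth_cmult smooth_comp_linear[OF gam0_linear[OF lam]] sm)+
    have k3: "A (gam lam p s) $ 3 = B p" for p s
    proof -
      have "\<forall>t. ((\<lambda>s. A (gam lam p s) $ 3) has_real_derivative 0) (at t)"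
        using pathd[where i=3] EE(3) by simp
      then show ?thesis unfolding B_def by (rule DERIV_isconst_all)
    qed
    have k4: "A (gam lam p s) $ 4 = A (gam lam p s) $ 2 + C2 p" for p s
    proof -
      have "\<forall>t. ((\<lambda>s. A (gam lam p s) $ 4 - A (gam lam p s) $ 2) has_real_derivative 0) (at t)"
        using DERIV_diff[OF pathd[where i=4 and p=p] pathd[where i=2 and p=p]] EE(2,4) by simp
      then have "A (gam lam p s) $ 4 - A (gam lam p s) $ 2 = A (gam lam p 0) $ 4 - A (gam lam p 0) $ 2"
        by (rule DERIV_isconst_all)
      then show ?thesis unfolding C2_def by simp
    qed
    have k1: "A (gam lam p s) $ 1 = C2 p * s + C3 p" for p s
    proof -
      have "\<forall>t. ((\<lambda>s. A (gam lam p s) $ 1 - C2 p * s) has_real_derivative 0) (at t)"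
      proof
        fix t
        have "((\<lambda>s. A (gam lam p s) $ 1 - C2 p * s) has_real_derivative E 1 (gam lam p t) - C2 p * 1) (at t)"
          by (intro DERIV_diff pathd DERIV_cmult DERIV_ident)
        then show "((\<lambda>s. A (gam lam p s) $ 1 - C2 p * s) has_real_derivative 0) (at t)"
          using EE(1) k4 by simp
      qed
      then have "A (gam lam p s) $ 1 - C2 p * s = A (gam lam p 0) $ 1 - C2 p * 0"
        by (rule DERIV_isconst_all)
      then show ?thesis unfolding C3_def by simp
    qed
    have k2: "A (gam lam p s) $ 2 = C2 p * s^2 / 2 + C3 p * s + C1 p" for p s
    proof -
      have "\<forall>t. ((\<lambda>s. A (gam lam p s) $ 2 - (C2 p * s^2 / 2 + C3 p * s)) has_real_derivative 0) (at t)"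
      proof
        fix t
        have "((\<lambda>s. A (gam lam p s) $ 2 - (C2 p * s^2 / 2 + C3 p * s)) has_real_derivative
               E 2 (gam lam p t) - (C2 p * t + C3 p)) (at t)"
          by (auto intro!: derivative_eq_intros pathd)
        then show "((\<lambda>s. A (gam lam p s) $ 2 - (C2 p * s^2 / 2 + C3 p * s)) has_real_derivative 0) (at t)"
          using EE(2) k1 by simp
      qed
      then have "A (gam lam p s) $ 2 - (C2 p * s^2 / 2 + C3 p * s) = A (gam lam p 0) $ 2 - (C2 p * 0^2 / 2 + C3 p * 0)"
        by (rule DERIV_isconst_all)
      then show ?thesis unfolding C1_def by simp
    qed
    show "\<exists>C1 C2 C3 B :: real^3 \<Rightarrow> real. smooth C1 \<and> smooth C2 \<and> smooth C3 \<and> smooth B \<and>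
      (\<forall>x. let p = vector [t1 x, t3 x, t4 x] in
         A x $ 1 = C2 p * t2 x + C3 p \<and>
         A x $ 2 = C2 p * (t2 x)^2 / 2 + C3 p * t2 x + C1 p \<and>
         A x $ 3 = B p \<and>
         A x $ 4 = A x $ 2 + C2 p)"
    proof (intro exI conjI allI)
      fix x
      show "let p = vector [t1 x, t3 x, t4 x] in
         A x $ 1 = C2 p * t2 x + C3 p \<and>
         A x $ 2 = C2 p * (t2 x)^2 / 2 + C3 p * t2 x + C1 p \<and>
         A x $ 3 = B p \<and>
         A x $ 4 = A x $ 2 + C2 p"
        using k1[of "P x" "t2 x"] k2[of "P x" "t2 x"] k3[of "P x" "t2 x"] k4[of "P x" "t2 x"]
        unfolding PI by (simp add: P_def Let_def)
    qed (fact smC)+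
  next
    assume "\<exists>C1 C2 C3 B :: real^3 \<Rightarrow> real. smooth C1 \<and> smooth C2 \<and> smooth C3 \<and> smooth B \<and>
      (\<forall>x. let p = vector [t1 x, t3 x, t4 x] in
         A x $ 1 = C2 p * t2 x + C3 p \<and>
         A x $ 2 = C2 p * (t2 x)^2 / 2 + C3 p * t2 x + C1 p \<and>
         A x $ 3 = B p \<and>
         A x $ 4 = A x $ 2 + C2 p)"
    then obtain C1 C2 C3 B :: "real^3 \<Rightarrow> real" where
      rep: "\<And>x. A x $ 1 = C2 (P x) * t2 x + C3 (P x) \<and>
         A x $ 2 = C2 (P x) * (t2 x)^2 / 2 + C3 (P x) * t2 x + C1 (P x) \<and>
         A x $ 3 = B (P x) \<and>
         A x $ 4 = A x $ 2 + C2 (P x)"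
      unfolding P_def Let_def by blast
    have r1: "A (gam lam p s) $ 1 = C2 p * s + C3 p"
      and r2: "A (gam lam p s) $ 2 = C2 p * s^2 / 2 + C3 p * s + C1 p"
      and r3: "A (gam lam p s) $ 3 = B p"
      and r4: "A (gam lam p s) $ 4 = C2 p * s^2 / 2 + C3 p * s + C1 p + C2 p" for p s
      using rep[of "gam lam p s"] unfolding Pg tg by auto
    show "\<forall>x. lie xi A x = 0"
    proof
      fix x
      define p where "p = P x"
      define t where "t = t2 x"
      have gx: "gam lam p t = x" unfolding p_def t_def by (rule PI)
      have f1: "(\<lambda>s. A (gam lam p s) $ 1) = (\<lambda>s. C2 p * s + C3 p)" using r1 by auto
      have f2: "(\<lambda>s. A (gam lam p s) $ 2) = (\<lambda>s. C2 p * s^2 / 2 + C3 p * s + C1 p)" using r2 by auto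
      have f3: "(\<lambda>s. A (gam lam p s) $ 3) = (\<lambda>s. B p)" using r3 by auto
      have f4: "(\<lambda>s. A (gam lam p s) $ 4) = (\<lambda>s. C2 p * s^2 / 2 + C3 p * s + C1 p + C2 p)" using r4 by auto
      have d1: "((\<lambda>s. C2 p * s + C3 p) has_real_derivative C2 p) (at t)"
        by (auto intro!: derivative_eq_intros)
      have d2: "((\<lambda>s. C2 p * s^2 / 2 + C3 p * s + C1 p) has_real_derivative C2 p * t + C3 p) (at t)"
        by (auto intro!: derivative_eq_intros)
      have d4: "((\<lambda>s. C2 p * s^2 / 2 + C3 p * s + C1 p + C2 p) has_real_derivative C2 p * t + C3 p) (at t)"
        by (auto intro!: derivative_eq_intros)
      have d3: "((\<lambda>s. B p) has_real_derivative 0) (at t)"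
        by (auto intro!: derivative_eq_intros)
      have e1: "E 1 x = C2 p" using DERIV_unique[OF pathd[where i=1 and p=p and t=t] d1[folded f1]] gx by simp
      have e2: "E 2 x = C2 p * t + C3 p" using DERIV_unique[OF pathd[where i=2 and p=p and t=t] d2[folded f2]] gx by simp
      have e3: "E 3 x = 0" using DERIV_unique[OF pathd[where i=3 and p=p and t=t] d3[folded f3]] gx by simp
      have e4: "E 4 x = C2 p * t + C3 p" using DERIV_unique[OF pathd[where i=4 and p=p and t=t] d4[folded f4]] gx by simp
      have a1: "A x $ 1 = C2 p * t + C3 p" using r1[of p t] gx by simp
      have a2: "A x $ 2 = C2 p * t^2 / 2 + C3 p * t + C1 p" using r2[of p t] gx by simp
      have a4: "A x $ 4 = C2 p * t^2 / 2 + C3 p * t + C1 p + C2 p" using r4[of p t] gx by simp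
      show "lie xi A x = 0" unfolding lieE using e1 e2 e3 e4 a1 a2 a4 by simp
    qed
  qed
qed

end
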